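(* Let $(R,\mathfrak m,k)$ be a $2$-dimensional Cohen–Macaulay local domain and let $I=(x,y)$ be an ideal generated by a system of parameters $x,y$ of $R$. Then $$h^0(I\otimes_R I)=\ell(R/I).$$
   Context: $h^0(X):=\ell(H^0_{\mathfrak m}(X))$, where $H^0_{\mathfrak m}(X)$ is the submodule of elements of $X$ annihilated by some power of $\mathfrak m$ and $\ell$ denotes length. *)

theory Defs
  imports Main "HOL-Library.Function_Algebras" "HOL-Library.Extended_Nat"
begin

text \<open>Commutative algebra over a commutative ring given as a type 'a (R = UNIV).\<close>

definition is_ideal :: "'a::comm_ring_1 set \<Rightarrow> bool" where
  "is_ideal I \<longleftrightarrow> 0 \<in> I \<and> (\<forall>a\<in>I. \<forall>b\<in>I. a + b \<in> I) \<and> (\<forall>r. \<forall>a\<in>I. r * a \<in> I)"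

definition ideal_gen :: "'a::comm_ring_1 set \<Rightarrow> 'a set" where
  "ideal_gen S = \<Inter>{I. is_ideal I \<and> S \<subseteq> I}"

definition prime_ideal :: "'a::comm_ring_1 set \<Rightarrow> bool" where
  "prime_ideal P \<longleftrightarrow> is_ideal P \<and> P \<noteq> UNIV \<and> (\<forall>a b. a * b \<in> P \<longrightarrow> a \<in> P \<or> b \<in> P)"

definition maximal_ideal :: "'a::comm_ring_1 set \<Rightarrow> bool" where
  "maximal_ideal M \<longleftrightarrow> is_ideal M \<and> M \<noteq> UNIV \<and>
     (\<forall>J. is_ideal J \<and> M \<subseteq> J \<longrightarrow> J = M \<or> J = UNIV)"

definition noetherian_ring :: "'a::comm_ring_1 itself \<Rightarrow> bool" where
  "noetherian_ring _ \<longleftrightarrow> (\<forall>I::'a set. is_ideal I \<longrightarrow> (\<exists>F. finite F \<and> I = ideal_gen F))"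

definition local_ring :: "'a::comm_ring_1 itself \<Rightarrow> bool" where
  "local_ring _ \<longleftrightarrow> noetherian_ring TYPE('a) \<and> (\<exists>!M::'a set. maximal_ideal M)"

definition the_max_ideal :: "'a::comm_ring_1 set" where
  "the_max_ideal = (THE M. maximal_ideal M)"

definition radical :: "'a::comm_ring_1 set \<Rightarrow> 'a set" where
  "radical I = {a. \<exists>n. a ^ n \<in> I}"

definition krull_dim :: "'a::comm_ring_1 itself \<Rightarrow> enat" where
  "krull_dim _ = Sup {enat (length L - 1) | L::'a set list.
      L \<noteq> [] \<and> sorted_wrt (\<subset>) L \<and> (\<forall>P\<in>set L. prime_ideal P)}"

definition regular_sequence :: "'a::comm_ring_1 list \<Rightarrow> bool" where
  "regular_sequence xs \<longleftrightarrow> set xs \<subseteq> the_max_ideal \<and> ideal_gen (set xs) \<noteq> UNIV \<and>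
     (\<forall>i < length xs. \<forall>r. r * xs ! i \<in> ideal_gen (set (take i xs))
                           \<longrightarrow> r \<in> ideal_gen (set (take i xs)))"

definition depth :: "'a::comm_ring_1 itself \<Rightarrow> enat" where
  "depth _ = Sup {enat (length xs) | xs::'a list. regular_sequence xs}"

definition cohen_macaulay_local :: "'a::comm_ring_1 itself \<Rightarrow> bool" where
  "cohen_macaulay_local _ \<longleftrightarrow> local_ring TYPE('a) \<and> depth TYPE('a) = krull_dim TYPE('a)"

definition system_of_parameters2 :: "'a::comm_ring_1 \<Rightarrow> 'a \<Rightarrow> bool" where
  "system_of_parameters2 x y \<longleftrightarrow> krull_dim TYPE('a) = 2 \<and>
     x \<in> the_max_ideal \<and> y \<in> the_max_ideal \<and> radical (ideal_gen {x, y}) = the_max_ideal"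

text \<open>Modules: submodules of an ambient abelian group with scalar action smul.\<close>
definition submod :: "('a \<Rightarrow> 'm \<Rightarrow> 'm) \<Rightarrow> 'm::ab_group_add set \<Rightarrow> bool" where
  "submod smul S \<longleftrightarrow> 0 \<in> S \<and> (\<forall>a\<in>S. \<forall>b\<in>S. a + b \<in> S) \<and> (\<forall>a\<in>S. - a \<in> S) \<and>
     (\<forall>r. \<forall>a\<in>S. smul r a \<in> S)"

definition submod_gen :: "('a \<Rightarrow> 'm \<Rightarrow> 'm) \<Rightarrow> 'm::ab_group_add set \<Rightarrow> 'm set" where
  "submod_gen smul G = \<Inter>{S. submod smul S \<and> G \<subseteq> S}"

text \<open>Length of the quotient module M/N (N \<subseteq> M submodules): supremum of lengths of
  strict chains of submodules between N and M (these correspond to chains in M/N).\<close>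
definition qlength :: "('a \<Rightarrow> 'm \<Rightarrow> 'm) \<Rightarrow> 'm::ab_group_add set \<Rightarrow> 'm set \<Rightarrow> enat" where
  "qlength smul N M = Sup {enat (length L - 1) | L. L \<noteq> [] \<and> sorted_wrt (\<subset>) L \<and>
      (\<forall>S\<in>set L. submod smul S \<and> N \<subseteq> S \<and> S \<subseteq> M)}"

text \<open>Tensor product I \<otimes>_R I, constructed as F/N where F is the free module on I \<times> I
  (finitely supported functions I \<times> I \<rightarrow> R) and N is generated by the bilinearity relations.\<close>
definition fsmul :: "'a::comm_ring_1 \<Rightarrow> ('a \<times> 'a \<Rightarrow> 'a) \<Rightarrow> ('a \<times> 'a \<Rightarrow> 'a)" where
  "fsmul r f = (\<lambda>p. r * f p)"

definition basis_vec :: "'a::comm_ring_1 \<Rightarrow> 'a \<Rightarrow> ('a \<times> 'a \<Rightarrow> 'a)" where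
  "basis_vec a b = (\<lambda>p. if p = (a, b) then 1 else 0)"

definition free_mod :: "'a::comm_ring_1 set \<Rightarrow> ('a \<times> 'a \<Rightarrow> 'a) set" where
  "free_mod I = {f. finite {p. f p \<noteq> 0} \<and> (\<forall>p. f p \<noteq> 0 \<longrightarrow> p \<in> I \<times> I)}"

definition tensor_rels :: "'a::comm_ring_1 set \<Rightarrow> ('a \<times> 'a \<Rightarrow> 'a) set" where
  "tensor_rels I = submod_gen fsmul
     ({basis_vec (a + a') b - basis_vec a b - basis_vec a' b | a a' b. a \<in> I \<and> a' \<in> I \<and> b \<in> I}
    \<union> {basis_vec a (b + b') - basis_vec a b - basis_vec a b' | a b b'. a \<in> I \<and> b \<in> I \<and> b' \<in> I}
    \<union> {basis_vec (r * a) b - fsmul r (basis_vec a b) | r a b. a \<in> I \<and> b \<in> I}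
    \<union> {basis_vec a (r * b) - fsmul r (basis_vec a b) | r a b. a \<in> I \<and> b \<in> I})"

text \<open>H^0_m(I \<otimes> I) as a submodule of F containing N: elements of F whose class is
  annihilated by some power m^n of the maximal ideal (m^n is generated by products of
  n elements of m).\<close>
definition H0_tensor :: "'a::comm_ring_1 set \<Rightarrow> ('a \<times> 'a \<Rightarrow> 'a) set" where
  "H0_tensor I = {f \<in> free_mod I. \<exists>n. \<forall>xs. length xs = n \<and> set xs \<subseteq> the_max_ideal
                       \<longrightarrow> fsmul (prod_list xs) f \<in> tensor_rels I}"

definition h0_tensor_self :: "'a::comm_ring_1 set \<Rightarrow> enat" where
  "h0_tensor_self I = qlength fsmul (tensor_rels I) (H0_tensor I)"

definition length_quot :: "'a::comm_ring_1 set \<Rightarrow> enat" where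
  "length_quot I = qlength (*) I UNIV"

end

theory Submission
  imports Defs
begin


lemma is_ideal_ideal_gen: "is_ideal (ideal_gen S)"
  unfolding ideal_gen_def is_ideal_def by blast

lemma ideal_gen_sub: "S \<subseteq> ideal_gen S"
  unfolding ideal_gen_def by blast

lemma ideal_gen_least: "is_ideal J \<Longrightarrow> S \<subseteq> J \<Longrightarrow> ideal_gen S \<subseteq> J"
  unfolding ideal_gen_def by blast

lemma ideal_0: "is_ideal I \<Longrightarrow> 0 \<in> I" unfolding is_ideal_def by blast
lemma ideal_add: "is_ideal I \<Longrightarrow> a \<in> I \<Longrightarrow> b \<in> I \<Longrightarrow> a + b \<in> I" unfolding is_ideal_def by blast
lemma ideal_mult: "is_ideal I \<Longrightarrow> a \<in> I \<Longrightarrow> r * a \<in> I" unfolding is_ideal_def by blast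
lemma ideal_mult2: "is_ideal I \<Longrightarrow> a \<in> I \<Longrightarrow> a * r \<in> I" 
  using ideal_mult[of I a r] by (simp add: mult.commute)
lemma ideal_neg: "is_ideal I \<Longrightarrow> a \<in> I \<Longrightarrow> - a \<in> I"
  using ideal_mult[of I a "-1"] by simp
lemma ideal_diff: "is_ideal I \<Longrightarrow> a \<in> I \<Longrightarrow> b \<in> I \<Longrightarrow> a - b \<in> I"
  using ideal_add[of I a "-b"] ideal_neg[of I b] by simp

lemma ideal_gen_insert:
  fixes g :: "'a::comm_ring_1"
  shows "ideal_gen (insert g S) = {r*g + h | r h. h \<in> ideal_gen S}"
proof
  let ?R = "{r*g + h | r h. h \<in> ideal_gen S}"
  have "is_ideal ?R"
    unfolding is_ideal_def
  proof (intro conjI ballI allI)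
    show "0 \<in> ?R" using ideal_0[OF is_ideal_ideal_gen] by (intro CollectI exI[of _ 0]) auto
  next
    fix a b assume "a \<in> ?R" "b \<in> ?R"
    then obtain r1 h1 r2 h2 where "a = r1*g+h1" "h1 \<in> ideal_gen S" "b = r2*g+h2" "h2 \<in> ideal_gen S" by blast
    then show "a + b \<in> ?R"
      using ideal_add[OF is_ideal_ideal_gen, of h1 S h2]
      by (intro CollectI exI[of _ "r1+r2"] exI[of _ "h1+h2"]) (auto simp: algebra_simps)
  next
    fix c a assume "a \<in> ?R"
    then obtain r1 h1 where "a = r1*g+h1" "h1 \<in> ideal_gen S" by blast
    then show "c * a \<in> ?R"
      using ideal_mult[OF is_ideal_ideal_gen, of h1 S c]
      by (intro CollectI exI[of _ "c*r1"] exI[of _ "c*h1"]) (auto simp: algebra_simps)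
  qed
  moreover have "insert g S \<subseteq> ?R"
  proof
    fix s assume "s \<in> insert g S"
    then show "s \<in> ?R"
    proof
      assume "s = g" then show ?thesis using ideal_0[OF is_ideal_ideal_gen, of S]
        by (intro CollectI exI[of _ 1] exI[of _ 0]) auto
    next
      assume "s \<in> S" then show ?thesis using ideal_gen_sub[of S]
        by (intro CollectI exI[of _ 0] exI[of _ s]) auto
    qed
  qed
  ultimately show "ideal_gen (insert g S) \<subseteq> ?R" by (rule ideal_gen_least)
next
  show "{r*g + h | r h. h \<in> ideal_gen S} \<subseteq> ideal_gen (insert g S)"
  proof
    fix a assume "a \<in> {r*g + h | r h. h \<in> ideal_gen S}"
    then obtain r h where a: "a = r*g+h" "h \<in> ideal_gen S" by blast
    have "ideal_gen S \<subseteq> ideal_gen (insert g S)"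
      by (rule ideal_gen_least[OF is_ideal_ideal_gen]) (use ideal_gen_sub[of "insert g S"] in auto)
    moreover have "g \<in> ideal_gen (insert g S)" using ideal_gen_sub by blast
    ultimately show "a \<in> ideal_gen (insert g S)"
      using a ideal_add[OF is_ideal_ideal_gen] ideal_mult[OF is_ideal_ideal_gen] by blast
  qed
qed

lemma ideal_gen_empty: "ideal_gen {} = {0::'a::comm_ring_1}"
proof -
  have "is_ideal {0::'a}" unfolding is_ideal_def by auto
  then have "ideal_gen {} \<subseteq> {0::'a}" by (rule ideal_gen_least) auto
  then show ?thesis using ideal_0[OF is_ideal_ideal_gen, of "{}::'a set"] by blast
qed

lemma ideal_gen_single: "ideal_gen {g} = {r*g | r. True}"
  unfolding ideal_gen_insert ideal_gen_empty by auto

lemma ideal_gen_two: "ideal_gen {g, g'} = {a*g + b*g' | a b. True}"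
  unfolding ideal_gen_insert[of g] ideal_gen_single by auto



lemma ideal_gen_ideal: "is_ideal I \<Longrightarrow> ideal_gen I = I"
  using ideal_gen_least[of I I] ideal_gen_sub[of I] by blast

lemma prod_list_ideal: "is_ideal I \<Longrightarrow> N \<le> length ys \<Longrightarrow>
   (\<forall>xs. length xs = N \<and> set xs \<subseteq> H \<longrightarrow> prod_list xs \<in> I) \<Longrightarrow> set ys \<subseteq> H \<Longrightarrow> prod_list ys \<in> I"
proof -
  assume I: "is_ideal I" and N: "N \<le> length ys" and P: "\<forall>xs. length xs = N \<and> set xs \<subseteq> H \<longrightarrow> prod_list xs \<in> I"
    and ys: "set ys \<subseteq> H"
  have "prod_list ys = prod_list (take N ys) * prod_list (drop N ys)"
    by (metis append_take_drop_id prod_list.append)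
  moreover have "prod_list (take N ys) \<in> I" using P N ys
    by (metis length_take min.absorb2 order.trans set_take_subset)
  ultimately show ?thesis using ideal_mult2[OF I] by simp
qed

lemma pow_in_ideal:
  fixes I :: "'a::comm_ring_1 set"
  assumes I: "is_ideal I" and fin: "finite G" and pw: "\<forall>g\<in>G. \<exists>e. g^e \<in> I"
  shows "\<exists>N. \<forall>xs. length xs = N \<and> set xs \<subseteq> ideal_gen (G \<union> I) \<longrightarrow> prod_list xs \<in> I"
  using fin pw
proof (induction G rule: finite_induct)
  case empty
  show ?case
  proof (intro exI[of _ 1] allI impI)
    fix xs :: "'a list" assume "length xs = 1 \<and> set xs \<subseteq> ideal_gen ({} \<union> I)"
    then obtain a where "xs = [a]" "a \<in> I" using ideal_gen_ideal[OF I]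
      by (metis One_nat_def Un_empty_left length_0_conv length_Suc_conv list.set_intros(1) subsetD)
    then show "prod_list xs \<in> I" by simp
  qed
next
  case (insert g G)
  then obtain N where N: "\<forall>xs. length xs = N \<and> set xs \<subseteq> ideal_gen (G \<union> I) \<longrightarrow> prod_list xs \<in> I" by auto
  obtain e where e: "g^e \<in> I" using insert by auto
  define H where "H = ideal_gen (G \<union> I)"
  have H': "ideal_gen (insert g G \<union> I) = {r*g + h | r h. h \<in> H}"
    unfolding H_def by (simp add: ideal_gen_insert[symmetric])
  have key: "\<forall>i ys. length xs + i + length ys = N + e \<and> set xs \<subseteq> ideal_gen (insert g G \<union> I) \<and> set ys \<subseteq> H
      \<longrightarrow> prod_list xs * g^i * prod_list ys \<in> I" for xs
  proof (induction xs)
    case Nil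
    show ?case
    proof (intro allI impI)
      fix i ys assume a: "length ([]::'a list) + i + length ys = N + e \<and> set [] \<subseteq> ideal_gen (insert g G \<union> I) \<and> set ys \<subseteq> H"
      show "prod_list [] * g ^ i * prod_list ys \<in> I"
      proof (cases "e \<le> i")
        case True
        then have "g^i = g^e * g^(i-e)" by (simp add: power_add[symmetric])
        then have "g^i \<in> I" using ideal_mult2[OF I e] by simp
        then show ?thesis using ideal_mult2[OF I] by simp
      next
        case False
        then have "N \<le> length ys" using a by simp
        then have "prod_list ys \<in> I" using prod_list_ideal[OF I _ N] a unfolding H_def by blast
        then show ?thesis using ideal_mult[OF I] by simp
      qed
    qed
  next
    case (Cons b xs)
    show ?case
    proof (intro allI impI)
      fix i ys assume a: "length (b#xs) + i + length ys = N + e \<and> set (b#xs) \<subseteq> ideal_gen (insert g G \<union> I) \<and> set ys \<subseteq> H"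
      then obtain r h where b: "b = r*g+h" "h \<in> H" using H' by auto
      have 1: "prod_list xs * g^(Suc i) * prod_list ys \<in> I" using Cons.IH[rule_format, of "Suc i" ys] a by simp
      have 2: "prod_list xs * g^i * prod_list (h#ys) \<in> I" using Cons.IH[rule_format, of i "h#ys"] a b by simp
      have "prod_list (b#xs) * g^i * prod_list ys = r * (prod_list xs * g^(Suc i) * prod_list ys) + prod_list xs * g^i * prod_list (h#ys)"
        using b by (simp add: algebra_simps)
      then show "prod_list (b#xs) * g^i * prod_list ys \<in> I"
        using ideal_add[OF I] ideal_mult[OF I] 1 2 by simp
    qed
  qed
  show ?case
  proof (intro exI[of _ "N+e"] allI impI)
    fix xs :: "'a list" assume "length xs = N + e \<and> set xs \<subseteq> ideal_gen (insert g G \<union> I)"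
    then show "prod_list xs \<in> I" using key[of xs] by (metis add.right_neutral empty_subsetI list.size(3) mult.right_neutral power_0 prod_list.Nil set_empty)
  qed
qed

lemma lemmaL:
  fixes u v z s :: "'a::idom"
  assumes u0: "u \<noteq> 0" and reg: "\<And>r. r*v \<in> ideal_gen{u} \<Longrightarrow> r \<in> ideal_gen {u}" and z0: "z \<noteq> 0"
    and us: "u*s \<in> ideal_gen{z}" and vs: "v*s \<in> ideal_gen{z}"
  shows "s \<in> ideal_gen {z}"
proof -
  obtain p where p: "u*s = p*z" using us unfolding ideal_gen_single by auto
  obtain q where q: "v*s = q*z" using vs unfolding ideal_gen_single by auto
  have "z*(v*p) = z*(u*q)" using p q by (metis mult.commute mult.left_commute)
  then have "p*v = q*u" using z0 by (simp add: mult.commute)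
  then have "p \<in> ideal_gen {u}" using reg unfolding ideal_gen_single by auto
  then obtain c where "p = c*u" unfolding ideal_gen_single by auto
  then have "u*s = u*(c*z)" using p by (simp add: algebra_simps)
  then have "s = c*z" using u0 by simp
  then show ?thesis unfolding ideal_gen_single by auto
qed

lemma iterateL:
  fixes u v z :: "'a::idom"
  assumes u0: "u \<noteq> 0" and reg: "\<And>r. r*v \<in> ideal_gen{u} \<Longrightarrow> r \<in> ideal_gen {u}" and z0: "z \<noteq> 0"
    and um: "u \<in> M" and vm: "v \<in> M"
  shows "(\<forall>xs. length xs = k \<and> set xs \<subseteq> M \<longrightarrow> prod_list xs * s \<in> ideal_gen{z}) \<Longrightarrow> s \<in> ideal_gen{z}"
proof (induction k arbitrary: s)
  case 0
  then show ?case by auto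
next
  case (Suc k)
  have "a*s \<in> ideal_gen{z}" if "a \<in> M" for a
  proof (rule Suc.IH, intro allI impI)
    fix xs :: "'a list" assume "length xs = k \<and> set xs \<subseteq> M"
    then have "prod_list (a#xs) * s \<in> ideal_gen{z}" using Suc.prems that by (metis length_Cons set_ConsD subsetI subset_iff)
    then show "prod_list xs * (a * s) \<in> ideal_gen {z}" by (simp add: algebra_simps)
  qed
  then show ?case using lemmaL[OF u0 reg z0] um vm by blast
qed



definition lf :: "('a::comm_ring_1 \<times> 'a \<Rightarrow> 'a) \<Rightarrow> ('a \<times> 'a \<Rightarrow> 'a) \<Rightarrow> 'a" where
  "lf w f = (\<Sum>p\<in>{p. f p \<noteq> 0}. f p * w p)"

lemma lf_superset: "finite S \<Longrightarrow> {p. f p \<noteq> 0} \<subseteq> S \<Longrightarrow> lf w f = (\<Sum>p\<in>S. f p * w p)"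
  unfolding lf_def by (rule sum.mono_neutral_left) auto

lemma lf_add:
  assumes "finite {p. f p \<noteq> 0}" "finite {p. g p \<noteq> 0}"
  shows "lf w (f + g) = lf w f + lf w g"
proof -
  let ?S = "{p. f p \<noteq> 0} \<union> {p. g p \<noteq> 0}"
  have "lf w (f+g) = (\<Sum>p\<in>?S. (f+g) p * w p)" by (rule lf_superset) (use assms in auto)
  also have "\<dots> = (\<Sum>p\<in>?S. f p * w p) + (\<Sum>p\<in>?S. g p * w p)"
    by (simp add: distrib_right sum.distrib)
  also have "(\<Sum>p\<in>?S. f p * w p) = lf w f" by (rule lf_superset[symmetric]) (use assms in auto)
  also have "(\<Sum>p\<in>?S. g p * w p) = lf w g" by (rule lf_superset[symmetric]) (use assms in auto)
  finally show ?thesis .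
qed

lemma lf_smul:
  assumes "finite {p. f p \<noteq> 0}"
  shows "lf w (fsmul r f) = r * lf w f"
proof -
  have "lf w (fsmul r f) = (\<Sum>p\<in>{p. f p \<noteq> 0}. fsmul r f p * w p)"
    by (rule lf_superset) (use assms in \<open>auto simp: fsmul_def\<close>)
  also have "\<dots> = r * lf w f" unfolding lf_def fsmul_def by (simp add: sum_distrib_left algebra_simps)
  finally show ?thesis .
qed

lemma lf_neg:
  assumes "finite {p. f p \<noteq> 0}"
  shows "lf w (- f) = - lf w f"
proof -
  have e: "- f = fsmul (-1) f" by (rule ext) (simp add: fsmul_def)
  have "lf w (fsmul (-1) f) = (-1) * lf w f" by (rule lf_smul[OF assms])
  then show ?thesis unfolding e by simp
qed

lemma lf_diff:
  assumes "finite {p. f p \<noteq> 0}" "finite {p. g p \<noteq> 0}"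
  shows "lf w (f - g) = lf w f - lf w g"
proof -
  have "finite {p. (- g) p \<noteq> 0}" using assms by simp
  then have "lf w (f + - g) = lf w f + lf w (- g)" by (rule lf_add[OF assms(1)])
  then show ?thesis using lf_neg[OF assms(2), of w] by (simp only: diff_conv_add_uminus)
qed

lemma fin_basis: "finite {p. basis_vec a b p \<noteq> (0::'a::comm_ring_1)}"
proof -
  have "{p. basis_vec a b p \<noteq> (0::'a)} \<subseteq> {(a,b)}" by (auto simp: basis_vec_def split: if_splits)
  then show ?thesis using finite_subset by blast
qed

lemma lf_basis: "lf w (basis_vec a b) = w (a, b)"
  by (subst lf_superset[of "{(a,b)}"]) (auto simp: basis_vec_def)

lemma fin_add: "finite {p. f p \<noteq> 0} \<Longrightarrow> finite {p. g p \<noteq> 0} \<Longrightarrow> finite {p. (f + g) p \<noteq> (0::'a::comm_ring_1)}"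
  by (rule finite_subset[of _ "{p. f p \<noteq> 0} \<union> {p. g p \<noteq> 0}"]) auto
lemma fin_neg: "finite {p. f p \<noteq> 0} \<Longrightarrow> finite {p. (- f) p \<noteq> (0::'a::comm_ring_1)}"
  by simp
lemma fin_diff: "finite {p. f p \<noteq> 0} \<Longrightarrow> finite {p. g p \<noteq> 0} \<Longrightarrow> finite {p. (f - g) p \<noteq> (0::'a::comm_ring_1)}"
  by (rule finite_subset[of _ "{p. f p \<noteq> 0} \<union> {p. g p \<noteq> 0}"]) auto
lemma fin_smul: "finite {p. f p \<noteq> 0} \<Longrightarrow> finite {p. fsmul r f p \<noteq> (0::'a::comm_ring_1)}"
  by (rule finite_subset[of _ "{p. f p \<noteq> 0}"]) (auto simp: fsmul_def)

lemma submod_gen_least: "submod smul S \<Longrightarrow> G \<subseteq> S \<Longrightarrow> submod_gen smul G \<subseteq> S"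
  unfolding submod_gen_def by blast
lemma submod_gen_sub: "G \<subseteq> submod_gen smul G"
  unfolding submod_gen_def by blast
lemma submod_submod_gen: "submod smul (submod_gen smul G)"
  unfolding submod_gen_def submod_def by blast

lemma kernel_submod:
  assumes J: "is_ideal J"
  shows "submod fsmul {f. finite {p. f p \<noteq> 0} \<and> lf w f \<in> J}"
  unfolding submod_def
proof (intro conjI ballI allI)
  have "lf w 0 = 0" by (simp add: lf_def)
  then show "0 \<in> {f. finite {p. f p \<noteq> 0} \<and> lf w f \<in> J}" using ideal_0[OF J] by simp
next
  fix a b assume a: "a \<in> {f. finite {p. f p \<noteq> 0} \<and> lf w f \<in> J}" and b: "b \<in> {f. finite {p. f p \<noteq> 0} \<and> lf w f \<in> J}"
  then have fa: "finite {p. a p \<noteq> 0}" and fb: "finite {p. b p \<noteq> 0}" and la: "lf w a \<in> J" and lb: "lf w b \<in> J" by auto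
  have "lf w (a+b) = lf w a + lf w b" by (rule lf_add[OF fa fb])
  then have "lf w (a+b) \<in> J" using ideal_add[OF J la lb] by simp
  then show "a + b \<in> {f. finite {p. f p \<noteq> 0} \<and> lf w f \<in> J}" using fin_add[OF fa fb] by simp
next
  fix a assume a: "a \<in> {f. finite {p. f p \<noteq> 0} \<and> lf w f \<in> J}"
  then have fa: "finite {p. a p \<noteq> 0}" and la: "lf w a \<in> J" by auto
  have "lf w (-a) = - lf w a" by (rule lf_neg[OF fa])
  then have "lf w (-a) \<in> J" using ideal_neg[OF J la] by simp
  then show "- a \<in> {f. finite {p. f p \<noteq> 0} \<and> lf w f \<in> J}" using fin_neg[OF fa] by simp
next
  fix r a assume a: "a \<in> {f. finite {p. f p \<noteq> 0} \<and> lf w f \<in> J}"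
  then have fa: "finite {p. a p \<noteq> 0}" and la: "lf w a \<in> J" by auto
  have "lf w (fsmul r a) = r * lf w a" by (rule lf_smul[OF fa])
  then have "lf w (fsmul r a) \<in> J" using ideal_mult[OF J la] by simp
  then show "fsmul r a \<in> {f. finite {p. f p \<noteq> 0} \<and> lf w f \<in> J}" using fin_smul[OF fa] by simp
qed

lemma tensor_rels_kernel:
  assumes J: "is_ideal J"
    and g1: "\<And>a a' b. a \<in> I \<Longrightarrow> a' \<in> I \<Longrightarrow> b \<in> I \<Longrightarrow> w (a+a', b) - w (a,b) - w (a',b) \<in> J"
    and g2: "\<And>a b b'. a \<in> I \<Longrightarrow> b \<in> I \<Longrightarrow> b' \<in> I \<Longrightarrow> w (a, b+b') - w (a,b) - w (a,b') \<in> J"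
    and g3: "\<And>r a b. a \<in> I \<Longrightarrow> b \<in> I \<Longrightarrow> w (r*a, b) - r * w (a,b) \<in> J"
    and g4: "\<And>r a b. a \<in> I \<Longrightarrow> b \<in> I \<Longrightarrow> w (a, r*b) - r * w (a,b) \<in> J"
    and f: "f \<in> tensor_rels I"
  shows "lf w f \<in> J"
proof -
  let ?K = "{f. finite {p. f p \<noteq> 0} \<and> lf w f \<in> J}"
  have "tensor_rels I \<subseteq> ?K"
    unfolding tensor_rels_def
  proof (rule submod_gen_least[OF kernel_submod[OF J]], intro Un_least subsetI)
    fix h assume "h \<in> {basis_vec (a + a') b - basis_vec a b - basis_vec a' b |a a' b. a \<in> I \<and> a' \<in> I \<and> b \<in> I}"
    then obtain a a' b where h: "h = basis_vec (a + a') b - basis_vec a b - basis_vec a' b" "a \<in> I" "a' \<in> I" "b \<in> I" by blast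
    have "finite {p. h p \<noteq> 0}" unfolding h(1) by (intro fin_diff fin_basis)
    moreover have "lf w h = w (a+a', b) - w (a,b) - w (a',b)" unfolding h(1)
      by (simp only: lf_diff fin_diff fin_basis lf_basis)
    ultimately show "h \<in> ?K" using g1[OF h(2-4)] by simp
  next
    fix h assume "h \<in> {basis_vec a (b + b') - basis_vec a b - basis_vec a b' |a b b'. a \<in> I \<and> b \<in> I \<and> b' \<in> I}"
    then obtain a b b' where h: "h = basis_vec a (b + b') - basis_vec a b - basis_vec a b'" "a \<in> I" "b \<in> I" "b' \<in> I" by blast
    have "finite {p. h p \<noteq> 0}" unfolding h(1) by (intro fin_diff fin_basis)
    moreover have "lf w h = w (a, b+b') - w (a,b) - w (a,b')" unfolding h(1)
      by (simp only: lf_diff fin_diff fin_basis lf_basis)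
    ultimately show "h \<in> ?K" using g2[OF h(2-4)] by simp
  next
    fix h assume "h \<in> {basis_vec (r * a) b - fsmul r (basis_vec a b) |r a b. a \<in> I \<and> b \<in> I}"
    then obtain r a b where h: "h = basis_vec (r * a) b - fsmul r (basis_vec a b)" "a \<in> I" "b \<in> I" by blast
    have "finite {p. h p \<noteq> 0}" unfolding h(1) by (intro fin_diff fin_basis fin_smul)
    moreover have "lf w h = w (r*a, b) - r * w (a,b)" unfolding h(1)
      by (simp only: lf_diff fin_diff fin_basis lf_basis lf_smul fin_smul)
    ultimately show "h \<in> ?K" using g3[OF h(2-3)] by simp
  next
    fix h assume "h \<in> {basis_vec a (r * b) - fsmul r (basis_vec a b) |r a b. a \<in> I \<and> b \<in> I}"
    then obtain r a b where h: "h = basis_vec a (r * b) - fsmul r (basis_vec a b)" "a \<in> I" "b \<in> I" by blast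
    have "finite {p. h p \<noteq> 0}" unfolding h(1) by (intro fin_diff fin_basis fin_smul)
    moreover have "lf w h = w (a, r*b) - r * w (a,b)" unfolding h(1)
      by (simp only: lf_diff fin_diff fin_basis lf_basis lf_smul fin_smul)
    ultimately show "h \<in> ?K" using g4[OF h(2-3)] by simp
  qed
  then show ?thesis using f by blast
qed



lemma fsmul_add_right: "fsmul r (f + g) = fsmul r f + fsmul r g"
  by (rule ext) (simp add: fsmul_def algebra_simps)
lemma fsmul_diff_right: "fsmul r (f - g) = fsmul r f - fsmul r g"
  by (rule ext) (simp add: fsmul_def algebra_simps)
lemma fsmul_add_left: "fsmul (a + b) f = fsmul a f + fsmul b f"
  by (rule ext) (simp add: fsmul_def algebra_simps)
lemma fsmul_diff_left: "fsmul (a - b) f = fsmul a f - fsmul b f"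
  by (rule ext) (simp add: fsmul_def algebra_simps)
lemma fsmul_neg_left: "fsmul (- a) f = - fsmul a f"
  by (rule ext) (simp add: fsmul_def algebra_simps)
lemma fsmul_assoc: "fsmul r (fsmul s f) = fsmul (r * s) f"
  by (rule ext) (simp add: fsmul_def algebra_simps)
lemma fsmul_0: "fsmul 0 f = 0"
  by (rule ext) (simp add: fsmul_def)
lemma fsmul_1: "fsmul 1 f = f"
  by (rule ext) (simp add: fsmul_def)
lemma fsmul_zero_right: "fsmul r 0 = 0"
  by (rule ext) (simp add: fsmul_def)

lemma submod_0: "submod sm S \<Longrightarrow> 0 \<in> S" unfolding submod_def by blast
lemma submod_add: "submod sm S \<Longrightarrow> a \<in> S \<Longrightarrow> b \<in> S \<Longrightarrow> a + b \<in> S" unfolding submod_def by blast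
lemma submod_neg: "submod sm S \<Longrightarrow> a \<in> S \<Longrightarrow> - a \<in> S" unfolding submod_def by blast
lemma submod_smul: "submod sm S \<Longrightarrow> a \<in> S \<Longrightarrow> sm r a \<in> S" unfolding submod_def by blast
lemma submod_diff: "submod sm S \<Longrightarrow> a \<in> S \<Longrightarrow> b \<in> S \<Longrightarrow> a - b \<in> S"
  using submod_add[of sm S a "-b"] submod_neg[of sm S b] by simp

lemma free_mod_submod: "submod fsmul (free_mod I)"
  unfolding submod_def
proof (intro conjI ballI allI)
  show "0 \<in> free_mod I" unfolding free_mod_def by simp
next
  fix a b :: "'a \<times> 'a \<Rightarrow> 'a" assume a: "a \<in> free_mod I" and b: "b \<in> free_mod I"
  have "{p. (a + b) p \<noteq> 0} \<subseteq> {p. a p \<noteq> 0} \<union> {p. b p \<noteq> 0}" by auto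
  then show "a + b \<in> free_mod I"
    using a b fin_add[of a b] unfolding free_mod_def by blast
next
  fix a :: "'a \<times> 'a \<Rightarrow> 'a" assume a: "a \<in> free_mod I"
  have "{p. (- a) p \<noteq> 0} = {p. a p \<noteq> 0}" by auto
  then show "- a \<in> free_mod I" using a unfolding free_mod_def by simp
  fix r
  have "{p. fsmul r a p \<noteq> 0} \<subseteq> {p. a p \<noteq> 0}" by (auto simp: fsmul_def)
  then show "fsmul r a \<in> free_mod I"
    using a fin_smul[of a r] unfolding free_mod_def by blast
qed

lemma basis_free: "a \<in> I \<Longrightarrow> b \<in> I \<Longrightarrow> basis_vec a b \<in> free_mod I"
  unfolding free_mod_def using fin_basis[of a b] by (auto simp: basis_vec_def split: if_splits)

lemma tensor_rels_submod: "submod fsmul (tensor_rels I)"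
  unfolding tensor_rels_def by (rule submod_submod_gen)

lemma tensor_rels_free: assumes II: "is_ideal I" shows "tensor_rels I \<subseteq> free_mod I"
  unfolding tensor_rels_def
proof (rule submod_gen_least[OF free_mod_submod], intro Un_least subsetI)
  fix h assume "h \<in> {basis_vec (a + a') b - basis_vec a b - basis_vec a' b |a a' b. a \<in> I \<and> a' \<in> I \<and> b \<in> I}"
  then obtain a a' b where h: "h = basis_vec (a + a') b - basis_vec a b - basis_vec a' b" "a \<in> I" "a' \<in> I" "b \<in> I" by blast
  show "h \<in> free_mod I" unfolding h(1)
    by (intro submod_diff[OF free_mod_submod] basis_free h(2-4) ideal_add[OF II])
next
  fix h assume "h \<in> {basis_vec a (b + b') - basis_vec a b - basis_vec a b' |a b b'. a \<in> I \<and> b \<in> I \<and> b' \<in> I}"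
  then obtain a b b' where h: "h = basis_vec a (b + b') - basis_vec a b - basis_vec a b'" "a \<in> I" "b \<in> I" "b' \<in> I" by blast
  show "h \<in> free_mod I" unfolding h(1)
    by (intro submod_diff[OF free_mod_submod] basis_free h(2-4) ideal_add[OF II])
next
  fix h assume "h \<in> {basis_vec (r * a) b - fsmul r (basis_vec a b) |r a b. a \<in> I \<and> b \<in> I}"
  then obtain r a b where h: "h = basis_vec (r * a) b - fsmul r (basis_vec a b)" "a \<in> I" "b \<in> I" by blast
  show "h \<in> free_mod I" unfolding h(1)
    by (intro submod_diff[OF free_mod_submod] basis_free h(2-3) submod_smul[OF free_mod_submod] ideal_mult[OF II])
next
  fix h assume "h \<in> {basis_vec a (r * b) - fsmul r (basis_vec a b) |r a b. a \<in> I \<and> b \<in> I}"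
  then obtain r a b where h: "h = basis_vec a (r * b) - fsmul r (basis_vec a b)" "a \<in> I" "b \<in> I" by blast
  show "h \<in> free_mod I" unfolding h(1)
    by (intro submod_diff[OF free_mod_submod] basis_free h(2-3) submod_smul[OF free_mod_submod] ideal_mult[OF II])
qed

lemma rel1: "a \<in> I \<Longrightarrow> a' \<in> I \<Longrightarrow> b \<in> I \<Longrightarrow> basis_vec (a + a') b - basis_vec a b - basis_vec a' b \<in> tensor_rels I"
  unfolding tensor_rels_def by (rule subsetD[OF submod_gen_sub]) blast
lemma rel2: "a \<in> I \<Longrightarrow> b \<in> I \<Longrightarrow> b' \<in> I \<Longrightarrow> basis_vec a (b + b') - basis_vec a b - basis_vec a b' \<in> tensor_rels I"
  unfolding tensor_rels_def by (rule subsetD[OF submod_gen_sub]) blast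
lemma rel3: "a \<in> I \<Longrightarrow> b \<in> I \<Longrightarrow> basis_vec (r * a) b - fsmul r (basis_vec a b) \<in> tensor_rels I"
  unfolding tensor_rels_def by (rule subsetD[OF submod_gen_sub]) blast
lemma rel4: "a \<in> I \<Longrightarrow> b \<in> I \<Longrightarrow> basis_vec a (r * b) - fsmul r (basis_vec a b) \<in> tensor_rels I"
  unfolding tensor_rels_def by (rule subsetD[OF submod_gen_sub]) blast

definition mcong :: "('a::comm_ring_1 \<times> 'a \<Rightarrow> 'a) set \<Rightarrow> _ \<Rightarrow> _ \<Rightarrow> bool" where
  "mcong N f g \<longleftrightarrow> f - g \<in> N"

lemma mcong_refl: "submod fsmul N \<Longrightarrow> mcong N f f"
  unfolding mcong_def using submod_0 by simp
lemma mcong_sym: "submod fsmul N \<Longrightarrow> mcong N f g \<Longrightarrow> mcong N g f"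
  unfolding mcong_def using submod_neg[of fsmul N "f - g"] by simp
lemma mcong_trans: "submod fsmul N \<Longrightarrow> mcong N f g \<Longrightarrow> mcong N g h \<Longrightarrow> mcong N f h"
  unfolding mcong_def using submod_add[of fsmul N "f - g" "g - h"] by simp
lemma mcong_add: "submod fsmul N \<Longrightarrow> mcong N f g \<Longrightarrow> mcong N f' g' \<Longrightarrow> mcong N (f + f') (g + g')"
  unfolding mcong_def using submod_add[of fsmul N "f - g" "f' - g'"] by (simp add: algebra_simps)
lemma mcong_smul: "submod fsmul N \<Longrightarrow> mcong N f g \<Longrightarrow> mcong N (fsmul r f) (fsmul r g)"
  unfolding mcong_def using submod_smul[of fsmul N "f - g" r] by (simp add: fsmul_diff_right)



definition nf :: "'a::comm_ring_1 \<Rightarrow> 'a \<Rightarrow> 'a \<Rightarrow> 'a \<Rightarrow> 'a \<Rightarrow> 'a \<Rightarrow> 'a \<times> 'a \<Rightarrow> 'a" where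
  "nf x y c1 c2 c3 c4 = fsmul c1 (basis_vec x x) + fsmul c2 (basis_vec x y) + fsmul c3 (basis_vec y x) + fsmul c4 (basis_vec y y)"

lemma nf_add: "nf x y c1 c2 c3 c4 + nf x y d1 d2 d3 d4 = nf x y (c1+d1) (c2+d2) (c3+d3) (c4+d4)"
  unfolding nf_def by (rule ext) (simp add: fsmul_def algebra_simps)
lemma nf_smul: "fsmul r (nf x y c1 c2 c3 c4) = nf x y (r*c1) (r*c2) (r*c3) (r*c4)"
  unfolding nf_def by (rule ext) (simp add: fsmul_def algebra_simps)
lemma nf_0: "nf x y 0 0 0 0 = 0"
  unfolding nf_def by (rule ext) (simp add: fsmul_def)
lemma fin_nf: "finite {p. nf x y c1 c2 c3 c4 p \<noteq> 0}"
  unfolding nf_def by (intro fin_add fin_smul fin_basis)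
lemma lf_nf: "lf w (nf x y c1 c2 c3 c4) = c1 * w (x,x) + c2 * w (x,y) + c3 * w (y,x) + c4 * w (y,y)"
  unfolding nf_def
  by (simp only: lf_add lf_smul lf_basis fin_add fin_smul fin_basis)

locale tsetup =
  fixes x y :: "'a::idom"
  assumes xnz: "x \<noteq> 0" and yreg: "\<And>r. r*y \<in> ideal_gen{x} \<Longrightarrow> r \<in> ideal_gen{x}"
begin

abbreviation "I \<equiv> ideal_gen {x, y}"
abbreviation "N \<equiv> tensor_rels I"
definition tt where "tt = basis_vec x y - basis_vec y x"

lemma II: "is_ideal I" by (rule is_ideal_ideal_gen)
lemma xI: "x \<in> I" using ideal_gen_sub by blast
lemma yI: "y \<in> I" using ideal_gen_sub by blast
lemma NS: "submod fsmul N" by (rule tensor_rels_submod)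
lemma Imem: "a \<in> I \<longleftrightarrow> (\<exists>p q. a = p*x + q*y)" unfolding ideal_gen_two by auto
lemma xsub: "ideal_gen {x} \<subseteq> I" by (rule ideal_gen_least[OF II]) (use xI in auto)
lemma ysub: "ideal_gen {y} \<subseteq> I" by (rule ideal_gen_least[OF II]) (use yI in auto)

lemma uniq:
  assumes "p*x + q*y = p'*x + q'*y"
  shows "q - q' \<in> I \<and> p - p' \<in> I"
proof -
  have "(q - q') * y = (p' - p) * x" using assms by (simp add: algebra_simps)
  then have "(q - q') * y \<in> ideal_gen {x}" unfolding ideal_gen_single by auto
  then have "q - q' \<in> ideal_gen {x}" by (rule yreg)
  then obtain k where k: "q - q' = k * x" unfolding ideal_gen_single by auto
  then have "x * (p' - p) = x * (k * y)" using \<open>(q - q') * y = (p' - p) * x\<close> by (simp add: algebra_simps)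
  then have "p' - p = k * y" using xnz by simp
  then have "p - p' = (-k) * y" by (simp add: algebra_simps)
  then have "p - p' \<in> ideal_gen {y}" unfolding ideal_gen_single by blast
  moreover have "q - q' \<in> ideal_gen {x}" using k unfolding ideal_gen_single by auto
  ultimately show ?thesis using xsub ysub by blast
qed

lemma mc_right:
  assumes a: "a \<in> I" shows "mcong N (basis_vec a (b1*x + b2*y)) (fsmul b1 (basis_vec a x) + fsmul b2 (basis_vec a y))"
proof -
  have b1: "b1*x \<in> I" and b2: "b2*y \<in> I" using ideal_mult[OF II] xI yI by auto
  have "mcong N (basis_vec a (b1*x + b2*y)) (basis_vec a (b1*x) + basis_vec a (b2*y))"
    using rel2[OF a b1 b2] unfolding mcong_def by (simp add: algebra_simps)
  moreover have "mcong N (basis_vec a (b1*x) + basis_vec a (b2*y)) (fsmul b1 (basis_vec a x) + fsmul b2 (basis_vec a y))"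
    by (rule mcong_add[OF NS]) (use rel4[OF a xI] rel4[OF a yI] in \<open>auto simp: mcong_def\<close>)
  ultimately show ?thesis by (rule mcong_trans[OF NS])
qed

lemma mc_left:
  assumes b: "b \<in> I" shows "mcong N (basis_vec (a1*x + a2*y) b) (fsmul a1 (basis_vec x b) + fsmul a2 (basis_vec y b))"
proof -
  have a1: "a1*x \<in> I" and a2: "a2*y \<in> I" using ideal_mult[OF II] xI yI by auto
  have "mcong N (basis_vec (a1*x + a2*y) b) (basis_vec (a1*x) b + basis_vec (a2*y) b)"
    using rel1[OF a1 a2 b] unfolding mcong_def by (simp add: algebra_simps)
  moreover have "mcong N (basis_vec (a1*x) b + basis_vec (a2*y) b) (fsmul a1 (basis_vec x b) + fsmul a2 (basis_vec y b))"
    by (rule mcong_add[OF NS]) (use rel3[OF xI b] rel3[OF yI b] in \<open>auto simp: mcong_def\<close>)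
  ultimately show ?thesis by (rule mcong_trans[OF NS])
qed

lemma basis_nf:
  assumes a: "a \<in> I" and b: "b \<in> I"
  shows "\<exists>c1 c2 c3 c4. mcong N (basis_vec a b) (nf x y c1 c2 c3 c4)"
proof -
  obtain a1 a2 where ad: "a = a1*x + a2*y" using a Imem by auto
  obtain b1 b2 where bd: "b = b1*x + b2*y" using b Imem by auto
  have 1: "mcong N (basis_vec a b) (fsmul b1 (basis_vec a x) + fsmul b2 (basis_vec a y))"
    using mc_right[OF a] bd by simp
  have 2: "mcong N (basis_vec a x) (fsmul a1 (basis_vec x x) + fsmul a2 (basis_vec y x))"
    using mc_left[OF xI] ad by simp
  have 3: "mcong N (basis_vec a y) (fsmul a1 (basis_vec x y) + fsmul a2 (basis_vec y y))"
    using mc_left[OF yI] ad by simp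
  have "mcong N (fsmul b1 (basis_vec a x) + fsmul b2 (basis_vec a y))
     (fsmul b1 (fsmul a1 (basis_vec x x) + fsmul a2 (basis_vec y x)) + fsmul b2 (fsmul a1 (basis_vec x y) + fsmul a2 (basis_vec y y)))"
    by (intro mcong_add[OF NS] mcong_smul[OF NS] 2 3)
  moreover have "fsmul b1 (fsmul a1 (basis_vec x x) + fsmul a2 (basis_vec y x)) + fsmul b2 (fsmul a1 (basis_vec x y) + fsmul a2 (basis_vec y y))
      = nf x y (b1*a1) (b2*a1) (b1*a2) (b2*a2)"
    unfolding nf_def by (rule ext) (simp add: fsmul_def algebra_simps)
  ultimately show ?thesis using mcong_trans[OF NS 1] by metis
qed

lemma nf_exists_aux:
  assumes "finite S"
  shows "\<forall>f. {p. f p \<noteq> 0} \<subseteq> S \<and> (\<forall>p. f p \<noteq> 0 \<longrightarrow> p \<in> I \<times> I) \<longrightarrow> (\<exists>c1 c2 c3 c4. mcong N f (nf x y c1 c2 c3 c4))"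
  using assms
proof (induction S rule: finite_induct)
  case empty
  show ?case
  proof (intro allI impI)
    fix f :: "'a \<times> 'a \<Rightarrow> 'a" assume "{p. f p \<noteq> 0} \<subseteq> {} \<and> (\<forall>p. f p \<noteq> 0 \<longrightarrow> p \<in> I \<times> I)"
    then have "f = 0" by (auto intro!: ext)
    then show "\<exists>c1 c2 c3 c4. mcong N f (nf x y c1 c2 c3 c4)" using mcong_refl[OF NS] nf_0 by metis
  qed
next
  case (insert q S)
  show ?case
  proof (intro allI impI)
    fix f :: "'a \<times> 'a \<Rightarrow> 'a" assume f: "{p. f p \<noteq> 0} \<subseteq> insert q S \<and> (\<forall>p. f p \<noteq> 0 \<longrightarrow> p \<in> I \<times> I)"
    show "\<exists>c1 c2 c3 c4. mcong N f (nf x y c1 c2 c3 c4)"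
    proof (cases "f q = 0")
      case True
      then have "{p. f p \<noteq> 0} \<subseteq> S" using f by auto
      then show ?thesis using insert.IH f by blast
    next
      case False
      obtain a b where q: "q = (a,b)" by (cases q)
      have ab: "a \<in> I" "b \<in> I" using f False q by auto
      define f' where "f' = f - fsmul (f q) (basis_vec a b)"
      have "{p. f' p \<noteq> 0} \<subseteq> S \<and> (\<forall>p. f' p \<noteq> 0 \<longrightarrow> p \<in> I \<times> I)"
        using f q by (auto simp: f'_def fsmul_def basis_vec_def split: if_splits)
      then obtain c1 c2 c3 c4 where c: "mcong N f' (nf x y c1 c2 c3 c4)" using insert.IH by blast
      obtain d1 d2 d3 d4 where d: "mcong N (basis_vec a b) (nf x y d1 d2 d3 d4)" using basis_nf[OF ab] by blast
      have "mcong N (f' + fsmul (f q) (basis_vec a b)) (nf x y c1 c2 c3 c4 + fsmul (f q) (nf x y d1 d2 d3 d4))"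
        by (intro mcong_add[OF NS] mcong_smul[OF NS] c d)
      moreover have "f' + fsmul (f q) (basis_vec a b) = f" unfolding f'_def by simp
      ultimately show ?thesis unfolding nf_smul nf_add by metis
    qed
  qed
qed

lemma nf_exists:
  assumes "f \<in> free_mod I"
  shows "\<exists>c1 c2 c3 c4. mcong N f (nf x y c1 c2 c3 c4)"
  using nf_exists_aux[of "{p. f p \<noteq> 0}"] assms unfolding free_mod_def by blast

end


context tsetup begin

definition mu :: "'a \<times> 'a \<Rightarrow> 'a" where "mu p = fst p * snd p"

lemma ideal0: "is_ideal {0::'a}" unfolding is_ideal_def by auto

lemma mu_N: "f \<in> N \<Longrightarrow> lf mu f = 0"
  using tensor_rels_kernel[OF ideal0, of I mu f] by (simp add: mu_def algebra_simps)

definition rep :: "'a \<Rightarrow> 'a \<times> 'a" where "rep a = (SOME pq. a = fst pq * x + snd pq * y)"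

lemma rep: "a \<in> I \<Longrightarrow> a = fst (rep a) * x + snd (rep a) * y"
proof -
  assume "a \<in> I"
  then obtain p q where "a = p*x + q*y" using Imem by auto
  then have "\<exists>pq. a = fst pq * x + snd pq * y" by (intro exI[of _ "(p,q)"]) simp
  then show ?thesis unfolding rep_def by (rule someI_ex)
qed

lemma rep_uniq: "a \<in> I \<Longrightarrow> a = p*x + q*y \<Longrightarrow> fst (rep a) - p \<in> I \<and> snd (rep a) - q \<in> I"
  using uniq[of "fst (rep a)" "snd (rep a)" p q] rep[of a] by auto

lemma rep_add: assumes "a \<in> I" "a' \<in> I"
  shows "fst (rep (a+a')) - fst (rep a) - fst (rep a') \<in> I \<and> snd (rep (a+a')) - snd (rep a) - snd (rep a') \<in> I"
proof -
  have r1: "a = fst (rep a) * x + snd (rep a) * y" by (rule rep[OF assms(1)])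
  have r2: "a' = fst (rep a') * x + snd (rep a') * y" by (rule rep[OF assms(2)])
  have "a + a' = (fst (rep a) * x + snd (rep a) * y) + (fst (rep a') * x + snd (rep a') * y)"
    using r1 r2 by (rule arg_cong2)
  also have "\<dots> = (fst (rep a) + fst (rep a')) * x + (snd (rep a) + snd (rep a')) * y"
    by (simp add: algebra_simps)
  finally have "fst (rep (a+a')) - (fst (rep a) + fst (rep a')) \<in> I \<and> snd (rep (a+a')) - (snd (rep a) + snd (rep a')) \<in> I"
    by (rule rep_uniq[OF ideal_add[OF II assms]])
  then show ?thesis by (simp only: diff_diff_eq)
qed

lemma rep_mult: assumes "a \<in> I"
  shows "fst (rep (r*a)) - r * fst (rep a) \<in> I \<and> snd (rep (r*a)) - r * snd (rep a) \<in> I"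
proof -
  have r1: "a = fst (rep a) * x + snd (rep a) * y" by (rule rep[OF assms(1)])
  have "r * a = r * (fst (rep a) * x + snd (rep a) * y)"
    using r1 by (rule arg_cong)
  also have "\<dots> = (r * fst (rep a)) * x + (r * snd (rep a)) * y"
    by (simp add: algebra_simps)
  finally show ?thesis by (rule rep_uniq[OF ideal_mult[OF II assms]])
qed

definition psi :: "'a \<times> 'a \<Rightarrow> 'a" where "psi p = fst (rep (fst p)) * snd (rep (snd p))"

lemma psi_N: "f \<in> N \<Longrightarrow> lf psi f \<in> I"
proof (rule tensor_rels_kernel[OF II])
  fix a a' b assume "a \<in> I" "a' \<in> I" "b \<in> I"
  have "psi (a + a', b) - psi (a, b) - psi (a', b) = (fst (rep (a+a')) - fst (rep a) - fst (rep a')) * snd (rep b)"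
    by (simp add: psi_def algebra_simps)
  then show "psi (a + a', b) - psi (a, b) - psi (a', b) \<in> I" using rep_add[OF \<open>a \<in> I\<close> \<open>a' \<in> I\<close>] ideal_mult2[OF II] by simp
next
  fix a b b' assume "a \<in> I" "b \<in> I" "b' \<in> I"
  have "psi (a, b + b') - psi (a, b) - psi (a, b') = fst (rep a) * (snd (rep (b+b')) - snd (rep b) - snd (rep b'))"
    by (simp add: psi_def algebra_simps)
  then show "psi (a, b + b') - psi (a, b) - psi (a, b') \<in> I" using rep_add[OF \<open>b \<in> I\<close> \<open>b' \<in> I\<close>] ideal_mult[OF II] by simp
next
  fix r a b assume "a \<in> I" "b \<in> I"
  have "psi (r*a, b) - r * psi (a, b) = (fst (rep (r*a)) - r * fst (rep a)) * snd (rep b)"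
    by (simp add: psi_def algebra_simps)
  then show "psi (r*a, b) - r * psi (a, b) \<in> I" using rep_mult[OF \<open>a \<in> I\<close>] ideal_mult2[OF II] by simp
  have "psi (a, r*b) - r * psi (a, b) = fst (rep a) * (snd (rep (r*b)) - r * snd (rep b))"
    by (simp add: psi_def algebra_simps)
  then show "psi (a, r*b) - r * psi (a, b) \<in> I" using rep_mult[OF \<open>b \<in> I\<close>] ideal_mult[OF II] by simp
qed

lemma fin_tt: "finite {p. tt p \<noteq> 0}" unfolding tt_def by (intro fin_diff fin_basis)

lemma ann: assumes "fsmul r tt \<in> N" shows "r \<in> I"
proof -
  have l1: "lf psi (fsmul r tt) = r * lf psi tt" by (rule lf_smul[OF fin_tt])
  have l2: "lf psi tt = psi (x,y) - psi (y,x)" unfolding tt_def by (simp only: lf_diff fin_basis lf_basis)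
  have "lf psi (fsmul r tt) = r * (psi (x,y) - psi (y,x))" using l1 l2 by simp
  then have rd: "r * (psi (x,y) - psi (y,x)) \<in> I" using psi_N[OF assms] by simp
  define A where "A = fst (rep x)" define B where "B = snd (rep y)"
  define C where "C = fst (rep y)" define D where "D = snd (rep x)"
  have "x = 1 * x + 0 * y" by simp
  then have AD: "A - 1 \<in> I" "D \<in> I" using rep_uniq[OF xI, of 1 0] unfolding A_def D_def by auto
  have "y = 0 * x + 1 * y" by simp
  then have B: "B - 1 \<in> I" using rep_uniq[OF yI, of 0 1] unfolding B_def by auto
  have d: "psi (x,y) - psi (y,x) = A * B - C * D" by (simp add: psi_def A_def B_def C_def D_def)
  have "A * B - C * D - 1 = (A - 1) * B + (B - 1) - C * D" by (simp add: algebra_simps)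
  moreover have "(A - 1) * B + (B - 1) - C * D \<in> I"
    using AD B ideal_add[OF II] ideal_diff[OF II] ideal_mult[OF II] ideal_mult2[OF II] by metis
  ultimately have "A * B - C * D - 1 \<in> I" by (simp only:)
  then have "r * (A * B - C * D - 1) \<in> I" using ideal_mult[OF II] by blast
  moreover have "r = r * (A * B - C * D) - r * (A * B - C * D - 1)" by (simp add: algebra_simps)
  ultimately show ?thesis using ideal_diff[OF II] rd d by metis
qed

lemma m1: "mcong N (fsmul x (basis_vec x y)) (fsmul y (basis_vec x x))"
proof -
  have "mcong N (fsmul x (basis_vec x y)) (basis_vec x (x*y))"
    using mcong_sym[OF NS] rel4[OF xI yI, of x] unfolding mcong_def by blast
  moreover have "mcong N (basis_vec x (x*y)) (fsmul y (basis_vec x x))"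
    using rel4[OF xI xI, of y] unfolding mcong_def by (simp add: mult.commute)
  ultimately show ?thesis by (rule mcong_trans[OF NS])
qed

lemma m2: "mcong N (fsmul x (basis_vec y x)) (fsmul y (basis_vec x x))"
proof -
  have "mcong N (fsmul x (basis_vec y x)) (basis_vec (x*y) x)"
    using mcong_sym[OF NS] rel3[OF yI xI, of x] unfolding mcong_def by blast
  moreover have "mcong N (basis_vec (x*y) x) (fsmul y (basis_vec x x))"
    using rel3[OF xI xI, of y] unfolding mcong_def by (simp add: mult.commute)
  ultimately show ?thesis by (rule mcong_trans[OF NS])
qed

lemma m3: "mcong N (fsmul y (basis_vec x y)) (fsmul x (basis_vec y y))"
proof -
  have "mcong N (fsmul y (basis_vec x y)) (basis_vec (y*x) y)"
    using mcong_sym[OF NS] rel3[OF xI yI, of y] unfolding mcong_def by blast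
  moreover have "mcong N (basis_vec (y*x) y) (fsmul x (basis_vec y y))"
    using rel3[OF yI yI, of x] unfolding mcong_def by (simp add: mult.commute)
  ultimately show ?thesis by (rule mcong_trans[OF NS])
qed

lemma m4: "mcong N (fsmul y (basis_vec y x)) (fsmul x (basis_vec y y))"
proof -
  have "mcong N (fsmul y (basis_vec y x)) (basis_vec y (y*x))"
    using mcong_sym[OF NS] rel4[OF yI xI, of y] unfolding mcong_def by blast
  moreover have "mcong N (basis_vec y (y*x)) (fsmul x (basis_vec y y))"
    using rel4[OF yI yI, of x] unfolding mcong_def by (simp add: mult.commute)
  ultimately show ?thesis by (rule mcong_trans[OF NS])
qed

lemma xtt: "fsmul x tt \<in> N"
proof -
  have "mcong N (fsmul x (basis_vec x y)) (fsmul x (basis_vec y x))"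
    using mcong_trans[OF NS m1 mcong_sym[OF NS m2]] .
  then show ?thesis unfolding tt_def mcong_def fsmul_diff_right .
qed

lemma ytt: "fsmul y tt \<in> N"
proof -
  have "mcong N (fsmul y (basis_vec x y)) (fsmul y (basis_vec y x))"
    using mcong_trans[OF NS m3 mcong_sym[OF NS m4]] .
  then show ?thesis unfolding tt_def mcong_def fsmul_diff_right .
qed

lemma Itt: assumes "a \<in> I" shows "fsmul a tt \<in> N"
proof -
  obtain p q where a: "a = p*x + q*y" using assms Imem by auto
  have "fsmul a tt = fsmul p (fsmul x tt) + fsmul q (fsmul y tt)"
    unfolding a fsmul_assoc fsmul_add_left ..
  then show ?thesis using submod_add[OF NS] submod_smul[OF NS] xtt ytt by metis
qed

lemma kernel:
  assumes f: "f \<in> free_mod I" and m: "lf mu f = 0"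
  shows "\<exists>r. f - fsmul r tt \<in> N"
proof -
  obtain c1 c2 c3 c4 where c: "mcong N f (nf x y c1 c2 c3 c4)" using nf_exists[OF f] by blast
  have ff: "finite {p. f p \<noteq> 0}" using f unfolding free_mod_def by auto
  have "lf mu (f - nf x y c1 c2 c3 c4) = 0" using mu_N c unfolding mcong_def by blast
  then have "lf mu (nf x y c1 c2 c3 c4) = 0" using lf_diff[OF ff fin_nf] m by simp
  then have eq: "c1 * (x*x) + c2 * (x*y) + c3 * (y*x) + c4 * (y*y) = 0" unfolding lf_nf by (simp add: mu_def)
  define c where "c = c2 + c3"
  have "(c4 * y) * y - (- (c1 * x + c * y)) * x = c1 * (x*x) + c2 * (x*y) + c3 * (y*x) + c4 * (y*y)"
    unfolding c_def by (simp add: algebra_simps)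
  then have "(c4 * y) * y = (- (c1 * x + c * y)) * x" using eq by simp
  then have "(c4 * y) * y \<in> ideal_gen {x}" unfolding ideal_gen_single by blast
  then have "c4 * y \<in> ideal_gen {x}" by (rule yreg)
  then have "c4 \<in> ideal_gen {x}" by (rule yreg)
  then obtain \<beta> where \<beta>: "c4 = \<beta> * x" unfolding ideal_gen_single by auto
  have "x * (c1 * x + (c + \<beta> * y) * y) = 0" using eq unfolding c_def \<beta> by (simp add: algebra_simps)
  then have e2: "c1 * x + (c + \<beta> * y) * y = 0" using xnz by simp
  then have "(c + \<beta> * y) * y = (- c1) * x" by (simp add: algebra_simps add_eq_0_iff)
  then have "(c + \<beta> * y) * y \<in> ideal_gen {x}" unfolding ideal_gen_single by blast
  then have "c + \<beta> * y \<in> ideal_gen {x}" by (rule yreg)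
  then obtain \<alpha> where \<alpha>: "c + \<beta> * y = \<alpha> * x" unfolding ideal_gen_single by auto
  have "x * c1 = x * (- \<alpha> * y)" using e2 \<alpha> by (simp add: algebra_simps add_eq_0_iff)
  then have c1: "c1 = - \<alpha> * y" using xnz mult_left_cancel by blast
  have c2: "c2 = \<alpha> * x - \<beta> * y - c3" using \<alpha> c_def by (simp add: algebra_simps)
  have "nf x y c1 c2 c3 c4 + fsmul c3 tt = fsmul \<alpha> (fsmul x (basis_vec x y) - fsmul y (basis_vec x x))
      + fsmul \<beta> (fsmul x (basis_vec y y) - fsmul y (basis_vec x y))"
    unfolding c1 c2 \<beta> nf_def tt_def by (rule ext) (simp add: fsmul_def algebra_simps)
  moreover have "fsmul x (basis_vec x y) - fsmul y (basis_vec x x) \<in> N" using m1 unfolding mcong_def .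
  moreover have "fsmul x (basis_vec y y) - fsmul y (basis_vec x y) \<in> N" using mcong_sym[OF NS m3] unfolding mcong_def .
  ultimately have g: "nf x y c1 c2 c3 c4 + fsmul c3 tt \<in> N" using submod_add[OF NS] submod_smul[OF NS] by metis
  have "f - fsmul (- c3) tt = (f - nf x y c1 c2 c3 c4) + (nf x y c1 c2 c3 c4 + fsmul c3 tt)"
    by (simp add: fsmul_neg_left)
  then have "f - fsmul (- c3) tt \<in> N" using submod_add[OF NS] c g unfolding mcong_def by metis
  then show ?thesis by blast
qed

lemma tt_free: "tt \<in> free_mod I"
  unfolding tt_def by (intro submod_diff[OF free_mod_submod] basis_free xI yI)

lemma H0_char:
  assumes xm: "x \<in> the_max_ideal"
    and pw: "\<exists>n0. \<forall>xs. length xs = n0 \<and> set xs \<subseteq> the_max_ideal \<longrightarrow> prod_list xs \<in> I"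
  shows "H0_tensor I = {n + fsmul r tt | n r. n \<in> N}"
proof
  show "H0_tensor I \<subseteq> {n + fsmul r tt | n r. n \<in> N}"
  proof
    fix f assume "f \<in> H0_tensor I"
    then have f: "f \<in> free_mod I" and "\<exists>n. \<forall>xs. length xs = n \<and> set xs \<subseteq> the_max_ideal \<longrightarrow> fsmul (prod_list xs) f \<in> N"
      unfolding H0_tensor_def by auto
    then obtain n where n: "\<forall>xs. length xs = n \<and> set xs \<subseteq> the_max_ideal \<longrightarrow> fsmul (prod_list xs) f \<in> N" by blast
    have "set (replicate n x) \<subseteq> the_max_ideal" using xm by auto
    then have "fsmul (x^n) f \<in> N" using n[rule_format, of "replicate n x"] by simp
    then have "lf mu (fsmul (x^n) f) = 0" by (rule mu_N)
    moreover have ff: "finite {p. f p \<noteq> 0}" using f unfolding free_mod_def by auto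
    ultimately have "x^n * lf mu f = 0" using lf_smul[OF ff] by simp
    then have "lf mu f = 0" using xnz by simp
    then obtain r where "f - fsmul r tt \<in> N" using kernel[OF f] by blast
    moreover have "f = (f - fsmul r tt) + fsmul r tt" by simp
    ultimately show "f \<in> {n + fsmul r tt | n r. n \<in> N}" by blast
  qed
next
  show "{n + fsmul r tt | n r. n \<in> N} \<subseteq> H0_tensor I"
  proof
    fix f assume "f \<in> {n + fsmul r tt | n r. n \<in> N}"
    then obtain n r where f: "f = n + fsmul r tt" "n \<in> N" by blast
    have "f \<in> free_mod I" unfolding f(1)
      using tensor_rels_free[OF II] f(2) tt_free submod_add[OF free_mod_submod] submod_smul[OF free_mod_submod] by blast
    moreover obtain n0 where n0: "\<forall>xs. length xs = n0 \<and> set xs \<subseteq> the_max_ideal \<longrightarrow> prod_list xs \<in> I" using pw by blast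
    have "\<forall>xs. length xs = n0 \<and> set xs \<subseteq> the_max_ideal \<longrightarrow> fsmul (prod_list xs) f \<in> N"
    proof (intro allI impI)
      fix xs :: "'a list" assume "length xs = n0 \<and> set xs \<subseteq> the_max_ideal"
      then have p: "prod_list xs \<in> I" using n0 by blast
      have "fsmul (prod_list xs) f = fsmul (prod_list xs) n + fsmul (prod_list xs * r) tt"
        unfolding f(1) fsmul_add_right fsmul_assoc ..
      moreover have "fsmul (prod_list xs * r) tt \<in> N" using Itt ideal_mult2[OF II p] by blast
      ultimately show "fsmul (prod_list xs) f \<in> N" using submod_add[OF NS] submod_smul[OF NS] f(2) by metis
    qed
    ultimately show "f \<in> H0_tensor I" unfolding H0_tensor_def by blast
  qed
qed

end


lemma qlength_corr:
  fixes N :: "('a::comm_ring_1 \<times> 'a \<Rightarrow> 'a) set" and tt and I :: "'a set"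
  assumes NS: "submod fsmul N" and II: "is_ideal I"
    and ann: "\<And>r. fsmul r tt \<in> N \<longleftrightarrow> r \<in> I"
  shows "qlength fsmul N {n + fsmul r tt | n r. n \<in> N} = qlength (*) I UNIV"
proof -
  define H where "H = {n + fsmul r tt | n r. n \<in> N}"
  define \<alpha> where "\<alpha> S = {r. fsmul r tt \<in> S}" for S
  define \<beta> where "\<beta> J = {n + fsmul r tt | n r. n \<in> N \<and> r \<in> J}" for J
  define SM where "SM = {S. submod fsmul S \<and> N \<subseteq> S \<and> S \<subseteq> H}"
  define IDL where "IDL = {J. submod (*) J \<and> I \<subseteq> J \<and> J \<subseteq> (UNIV::'a set)}"
  have a1: "\<alpha> S \<in> IDL" if "S \<in> SM" for S
  proof -
    have S: "submod fsmul S" "N \<subseteq> S" using that unfolding SM_def by auto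
    have "submod (*) (\<alpha> S)" unfolding submod_def \<alpha>_def
    proof (intro conjI ballI allI)
      show "0 \<in> {r. fsmul r tt \<in> S}" using submod_0[OF S(1)] by (simp add: fsmul_0)
    next
      fix a b assume "a \<in> {r. fsmul r tt \<in> S}" "b \<in> {r. fsmul r tt \<in> S}"
      then show "a + b \<in> {r. fsmul r tt \<in> S}" using submod_add[OF S(1)] by (simp add: fsmul_add_left)
    next
      fix a assume "a \<in> {r. fsmul r tt \<in> S}"
      then show "- a \<in> {r. fsmul r tt \<in> S}" using submod_neg[OF S(1)] by (simp add: fsmul_neg_left)
      fix r show "r * a \<in> {r. fsmul r tt \<in> S}" using \<open>a \<in> _\<close> submod_smul[OF S(1)]
        by (simp add: fsmul_assoc[symmetric])
    qed
    moreover have "I \<subseteq> \<alpha> S" unfolding \<alpha>_def using ann S(2) by blast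
    ultimately show ?thesis unfolding IDL_def by blast
  qed
  have a2: "\<beta> (\<alpha> S) = S" if "S \<in> SM" for S
  proof
    have S: "submod fsmul S" "N \<subseteq> S" "S \<subseteq> H" using that unfolding SM_def by auto
    show "\<beta> (\<alpha> S) \<subseteq> S" unfolding \<beta>_def \<alpha>_def using submod_add[OF S(1)] S(2) by blast
    show "S \<subseteq> \<beta> (\<alpha> S)"
    proof
      fix s assume "s \<in> S"
      then obtain n r where s: "s = n + fsmul r tt" "n \<in> N" using S(3) unfolding H_def by blast
      then have "fsmul r tt = s - n" by simp
      then have "fsmul r tt \<in> S" using submod_diff[OF S(1) \<open>s \<in> S\<close>] S(2) s(2) by auto
      then show "s \<in> \<beta> (\<alpha> S)" unfolding \<beta>_def \<alpha>_def using s by blast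
    qed
  qed
  have b1: "\<beta> J \<in> SM" if "J \<in> IDL" for J
  proof -
    have J: "submod (*) J" "I \<subseteq> J" using that unfolding IDL_def by auto
    have "submod fsmul (\<beta> J)" unfolding submod_def
    proof (intro conjI ballI allI)
      have "(0::'a \<times> 'a \<Rightarrow> 'a) = 0 + fsmul 0 tt" by (simp add: fsmul_0)
      then show "0 \<in> \<beta> J" unfolding \<beta>_def using submod_0[OF NS] submod_0[OF J(1)] by blast
    next
      fix a b assume "a \<in> \<beta> J" "b \<in> \<beta> J"
      then obtain n r n' r' where "a = n + fsmul r tt" "n \<in> N" "r \<in> J" "b = n' + fsmul r' tt" "n' \<in> N" "r' \<in> J"
        unfolding \<beta>_def by blast
      moreover have "n + fsmul r tt + (n' + fsmul r' tt) = (n + n') + fsmul (r + r') tt" by (simp add: fsmul_add_left algebra_simps)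
      ultimately show "a + b \<in> \<beta> J" unfolding \<beta>_def using submod_add[OF NS] submod_add[OF J(1)] by blast
    next
      fix a assume "a \<in> \<beta> J"
      then obtain n r where a: "a = n + fsmul r tt" "n \<in> N" "r \<in> J" unfolding \<beta>_def by blast
      have "- a = (- n) + fsmul (- r) tt" unfolding a by (simp add: fsmul_neg_left)
      then show "- a \<in> \<beta> J" unfolding \<beta>_def using submod_neg[OF NS a(2)] submod_neg[OF J(1) a(3)] by blast
      fix c
      have "fsmul c a = fsmul c n + fsmul (c * r) tt" unfolding a by (simp add: fsmul_add_right fsmul_assoc)
      then show "fsmul c a \<in> \<beta> J" unfolding \<beta>_def using submod_smul[OF NS a(2)] submod_smul[OF J(1) a(3), of c] by auto
    qed
    moreover have "N \<subseteq> \<beta> J"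
    proof
      fix n assume "n \<in> N"
      moreover have "n = n + fsmul 0 tt" by (simp add: fsmul_0)
      ultimately show "n \<in> \<beta> J" unfolding \<beta>_def using submod_0[OF J(1)] by blast
    qed
    moreover have "\<beta> J \<subseteq> H" unfolding \<beta>_def H_def by blast
    ultimately show ?thesis unfolding SM_def by blast
  qed
  have b2: "\<alpha> (\<beta> J) = J" if "J \<in> IDL" for J
  proof
    have J: "submod (*) J" "I \<subseteq> J" using that unfolding IDL_def by auto
    show "J \<subseteq> \<alpha> (\<beta> J)"
    proof
      fix r assume "r \<in> J"
      moreover have "fsmul r tt = 0 + fsmul r tt" by simp
      ultimately show "r \<in> \<alpha> (\<beta> J)" unfolding \<alpha>_def \<beta>_def using submod_0[OF NS] by blast
    qed
    show "\<alpha> (\<beta> J) \<subseteq> J"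
    proof
      fix r assume "r \<in> \<alpha> (\<beta> J)"
      then obtain n r' where e: "fsmul r tt = n + fsmul r' tt" "n \<in> N" "r' \<in> J" unfolding \<alpha>_def \<beta>_def by blast
      then have "fsmul (r - r') tt = n" by (simp add: fsmul_diff_left)
      then have "fsmul (r - r') tt \<in> N" using e(2) by simp
      then have "r - r' \<in> I" using ann by blast
      then have "r - r' \<in> J" using J(2) by blast
      then have "(r - r') + r' \<in> J" using submod_add[OF J(1) _ e(3)] by blast
      then show "r \<in> J" by simp
    qed
  qed
  have amono: "S \<subseteq> S' \<Longrightarrow> \<alpha> S \<subseteq> \<alpha> S'" for S S' unfolding \<alpha>_def by blast
  have bmono: "J \<subseteq> J' \<Longrightarrow> \<beta> J \<subseteq> \<beta> J'" for J J' unfolding \<beta>_def by blast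
  have eqsets: "{enat (length L - 1) | L. L \<noteq> [] \<and> sorted_wrt (\<subset>) L \<and> (\<forall>S\<in>set L. submod fsmul S \<and> N \<subseteq> S \<and> S \<subseteq> H)}
      = {enat (length L - 1) | L. L \<noteq> [] \<and> sorted_wrt (\<subset>) L \<and> (\<forall>S\<in>set L. submod (*) S \<and> I \<subseteq> S \<and> S \<subseteq> UNIV)}"
    (is "?A = ?B")
  proof
    show "?A \<subseteq> ?B"
    proof
      fix k assume "k \<in> ?A"
      then obtain L where L: "k = enat (length L - 1)" "L \<noteq> []" "sorted_wrt (\<subset>) L" "\<forall>S\<in>set L. S \<in> SM"
        unfolding SM_def by blast
      have "sorted_wrt (\<subset>) (map \<alpha> L)"
      proof (rule sorted_wrt_map_mono[OF L(3)])
        fix S S' assume "S \<in> set L" "S' \<in> set L" "S \<subset> S'"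
        then show "\<alpha> S \<subset> \<alpha> S'" using amono a2 L(4) by (metis psubsetE psubsetI)
      qed
      moreover have "\<forall>J\<in>set (map \<alpha> L). J \<in> IDL" using a1 L(4) by auto
      ultimately show "k \<in> ?B" unfolding IDL_def using L(1,2)
        by (intro CollectI exI[of _ "map \<alpha> L"]) auto
    qed
    show "?B \<subseteq> ?A"
    proof
      fix k assume "k \<in> ?B"
      then obtain L where L: "k = enat (length L - 1)" "L \<noteq> []" "sorted_wrt (\<subset>) L" "\<forall>S\<in>set L. S \<in> IDL"
        unfolding IDL_def by blast
      have "sorted_wrt (\<subset>) (map \<beta> L)"
      proof (rule sorted_wrt_map_mono[OF L(3)])
        fix S S' assume "S \<in> set L" "S' \<in> set L" "S \<subset> S'"
        then show "\<beta> S \<subset> \<beta> S'" using bmono b2 L(4) by (metis psubsetE psubsetI)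
      qed
      moreover have "\<forall>J\<in>set (map \<beta> L). J \<in> SM" using b1 L(4) by auto
      ultimately show "k \<in> ?A" unfolding SM_def using L(1,2)
        by (intro CollectI exI[of _ "map \<beta> L"]) auto
    qed
  qed
  show ?thesis unfolding qlength_def H_def[symmetric] eqsets ..
qed



theorem proposition3p2:
  fixes x y :: "'a::idom"
  assumes "cohen_macaulay_local TYPE('a)"
    and "krull_dim TYPE('a) = 2"
    and "system_of_parameters2 x y"
  shows "h0_tensor_self (ideal_gen {x, y}) = length_quot (ideal_gen {x, y})"
proof -
  have loc: "local_ring TYPE('a)" and dep: "depth TYPE('a) = 2"
    using assms(1,2) unfolding cohen_macaulay_local_def by auto
  have noeth: "noetherian_ring TYPE('a)" and ex1: "\<exists>!M::'a set. maximal_ideal M"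
    using loc unfolding local_ring_def by auto
  define m :: "'a set" where "m = the_max_ideal"
  have mmax: "maximal_ideal m" unfolding m_def the_max_ideal_def using theI'[OF ex1] .
  have mI: "is_ideal m" and mU: "m \<noteq> UNIV" using mmax unfolding maximal_ideal_def by auto
  have one_m: "(1::'a) \<notin> m"
  proof
    assume "1 \<in> m"
    then have "r \<in> m" for r using ideal_mult[OF mI, of 1 r] by simp
    then show False using mU by blast
  qed
  define I where "I = ideal_gen {x, y}"
  have II: "is_ideal I" unfolding I_def by (rule is_ideal_ideal_gen)
  have xm: "x \<in> m" and ym: "y \<in> m" and rad: "radical I = m"
    using assms(3) unfolding system_of_parameters2_def m_def I_def by auto
  define A where "A = {enat (length xs) | xs::'a list. regular_sequence xs}"
  have SA: "Sup A = 2" using dep unfolding depth_def A_def by simp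
  have "A \<noteq> {}" using SA by (auto simp: Sup_enat_def)
  moreover have "finite A" using SA \<open>A \<noteq> {}\<close> by (auto simp: Sup_enat_def split: if_splits)
  ultimately have "Max A = 2" using SA by (simp add: Sup_enat_def)
  then have "2 \<in> A" using \<open>finite A\<close> \<open>A \<noteq> {}\<close> Max_in by metis
  then obtain xs :: "'a list" where xs: "regular_sequence xs" "2 = enat (length xs)" unfolding A_def by blast
  then have "length xs = 2" by (metis enat.inject numeral_eq_enat)
  then obtain u v where uv: "xs = [u, v]"
    by (metis One_nat_def Suc_1 length_0_conv length_Suc_conv)
  have um: "u \<in> m" and vm: "v \<in> m" using xs(1) unfolding uv regular_sequence_def m_def by auto
  have r0: "\<And>r. r * u \<in> ideal_gen {} \<Longrightarrow> r \<in> ideal_gen {}"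
    using xs(1) unfolding uv regular_sequence_def by (metis length_Cons list.size(3) nth_Cons_0 set_empty take0 zero_less_Suc)
  have reg: "\<And>r. r * v \<in> ideal_gen {u} \<Longrightarrow> r \<in> ideal_gen {u}"
  proof -
    fix r assume "r * v \<in> ideal_gen {u}"
    moreover have "take 1 [u, v] = [u]" by simp
    moreover have "[u,v] ! 1 = v" by simp
    ultimately show "r \<in> ideal_gen {u}" using xs(1) unfolding uv regular_sequence_def
      by (metis One_nat_def empty_set length_Cons less_Suc_eq list.size(3) list.simps(15))
  qed
  have u0: "u \<noteq> 0"
  proof
    assume "u = 0"
    then have "1 * u \<in> ideal_gen {}" by (simp add: ideal_gen_empty)
    then have "(1::'a) \<in> ideal_gen {}" by (rule r0)
    then show False by (simp add: ideal_gen_empty)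
  qed
  obtain F where F: "finite F" "m = ideal_gen F" using noeth mI unfolding noetherian_ring_def by blast
  have "\<forall>g\<in>F. \<exists>e. g^e \<in> I"
  proof
    fix g assume "g \<in> F"
    then have "g \<in> m" using F(2) ideal_gen_sub by blast
    then show "\<exists>e. g^e \<in> I" using rad unfolding radical_def by blast
  qed
  then obtain n0 where n0: "\<forall>xs. length xs = n0 \<and> set xs \<subseteq> ideal_gen (F \<union> I) \<longrightarrow> prod_list xs \<in> I"
    using pow_in_ideal[OF II F(1)] by blast
  have "m \<subseteq> ideal_gen (F \<union> I)" unfolding F(2)
    by (rule ideal_gen_least[OF is_ideal_ideal_gen]) (use ideal_gen_sub in blast)
  then have pw: "\<forall>xs. length xs = n0 \<and> set xs \<subseteq> m \<longrightarrow> prod_list xs \<in> I" using n0 by blast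
  have x0: "x \<noteq> 0"
  proof
    assume x0: "x = 0"
    have Iy: "I = ideal_gen {y}" unfolding I_def x0 ideal_gen_two ideal_gen_single by auto
    have y0: "y \<noteq> 0"
    proof
      assume "y = 0"
      then have "I = {0}" using Iy by (simp add: ideal_gen_single)
      moreover obtain e where "u^e \<in> I" using um rad unfolding radical_def by blast
      ultimately show False using u0 by simp
    qed
    have hyp: "\<forall>xs. length xs = n0 \<and> set xs \<subseteq> m \<longrightarrow> prod_list xs * 1 \<in> ideal_gen {y}" using pw Iy by simp
    have "1 \<in> ideal_gen {y}"
      by (rule iterateL[where u=u and v=v and z=y and M=m and k=n0 and s=1]) (use u0 reg y0 um vm hyp in auto)
    then obtain r where "1 = r * y" unfolding ideal_gen_single by auto
    then have "1 \<in> m" using ideal_mult[OF mI ym, of r] by simp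
    then show False using one_m by simp
  qed
  have yreg: "r \<in> ideal_gen {x}" if ry: "r * y \<in> ideal_gen {x}" for r
  proof (rule iterateL[where u=u and v=v and z=x and M=m and k=n0 and s=r])
    show "u \<noteq> 0" "x \<noteq> 0" "u \<in> m" "v \<in> m" by (fact u0 x0 um vm)+
    show "\<And>r. r * v \<in> ideal_gen {u} \<Longrightarrow> r \<in> ideal_gen {u}" by (rule reg)
  next
    show "\<forall>xs. length xs = n0 \<and> set xs \<subseteq> m \<longrightarrow> prod_list xs * r \<in> ideal_gen {x}"
    proof (intro allI impI)
    fix xs :: "'a list" assume "length xs = n0 \<and> set xs \<subseteq> m"
    then have "prod_list xs \<in> I" using pw by blast
    then obtain a b where ab: "prod_list xs = a * x + b * y" unfolding I_def ideal_gen_two by blast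
    obtain c where c: "r * y = c * x" using ry unfolding ideal_gen_single by auto
    have "prod_list xs * r = (a * r + b * c) * x" unfolding ab using c by (simp add: algebra_simps)
    then show "prod_list xs * r \<in> ideal_gen {x}" unfolding ideal_gen_single by blast
  qed
  qed
  interpret T: tsetup x y using x0 yreg by unfold_locales auto
  have H: "H0_tensor I = {n + fsmul r T.tt | n r. n \<in> tensor_rels I}"
    unfolding I_def by (rule T.H0_char) (use xm pw in \<open>auto simp: m_def I_def\<close>)
  have ann: "fsmul r T.tt \<in> tensor_rels I \<longleftrightarrow> r \<in> I" for r
    using T.ann T.Itt unfolding I_def by blast
  show ?thesis
    unfolding h0_tensor_self_def length_quot_def I_def[symmetric] H
    by (rule qlength_corr[OF tensor_rels_submod II ann])
qed


end
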